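(* Let $\mathbb{E},\mathbb{F}$ be finite-dimensional real inner-product spaces, $K\subseteq\mathbb{E}$ a pointed closed convex cone with nonempty interior, $\mathcal{A}\colon\mathbb{E}\to\mathbb{F}^*$ linear, $b\in\mathbb{F}^*$, and $\mathcal{C}:=\{x\in K : \mathcal{A}(x)=b\}$. Suppose $\mathcal{C}\cap\operatorname{int}(K)\neq\emptyset$ and $\mathcal{C}$ is compact. Then the following are equivalent: (i) for every $c\in\mathbb{E}^*\setminus[\operatorname{cone}(\mathcal{C})]^\circ$, the optimization problem $\max\{\langle c,x\rangle : \mathcal{A}(x)=b,\ x\in K\}$ and its dual have a strictly complementary pair of optimal solutions; (ii) $\mathcal{C}^\circ$ is facially exposed.
   Context: $K^*:=\{s\in\mathbb{E}^*:\langle s,x\rangle\ge0\ \forall x\in K\}$. The dual problem is $\min\{\langle b,y\rangle : y\in\mathbb{F},\ \mathcal{A}^*(y)-c\in K^*\}$, with slack $s=\mathcal{A}^*(y)-c$. A strictly complementary pair of optimal solutions is a primal optimal $\bar x$ and a dual optimal $\bar y$ with slack $\bar s$ such that there is a face $F$ of $K$ with $\bar x\in\operatorname{relint}(F)$ and $\bar s\in\operatorname{relint}(K^*\cap F^\perp)$. For $D\subseteq\mathbb{E}$, $D^\circ:=\{y\in\mathbb{E}^*:\langle y,x\rangle\le1\ \forall x\in D\}$ is the polar; $\operatorname{cone}(\mathcal{C})$ is the smallest convex cone containing $\mathcal{C}$ together with the origin. A convex set is facially exposed if all its faces are exposed (i.e., of the form $D\cap H$ for a supporting hyperplane $H$,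 or trivial). *)

theory Defs
  imports "HOL-Analysis.Analysis"
begin

(* E^* and F^* are identified with E and F via the inner product. *)

definition polar :: "'a::real_inner set \<Rightarrow> 'a set" where
  "polar D = {y. \<forall>x\<in>D. y \<bullet> x \<le> 1}"

definition dual_cone :: "'a::real_inner set \<Rightarrow> 'a set" where
  "dual_cone K = {s. \<forall>x\<in>K. s \<bullet> x \<ge> 0}"

definition orth :: "'a::real_inner set \<Rightarrow> 'a set" where
  "orth F = {s. \<forall>x\<in>F. s \<bullet> x = 0}"

definition facially_exposed :: "'a::euclidean_space set \<Rightarrow> bool" where
  "facially_exposed D \<longleftrightarrow> (\<forall>F. F face_of D \<longrightarrow> F exposed_face_of D)"

(* primal: max { <c,x> : A x = b, x \<in> K } *)
definition primal_optimal ::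
  "('e::euclidean_space \<Rightarrow> 'f::euclidean_space) \<Rightarrow> 'f \<Rightarrow> 'e set \<Rightarrow> 'e \<Rightarrow> 'e \<Rightarrow> bool" where
  "primal_optimal A b K c x \<longleftrightarrow>
     x \<in> K \<and> A x = b \<and> (\<forall>x'. x' \<in> K \<and> A x' = b \<longrightarrow> c \<bullet> x' \<le> c \<bullet> x)"

(* dual: min { <b,y> : A^*(y) - c \<in> K^* } *)
definition dual_optimal ::
  "('e::euclidean_space \<Rightarrow> 'f::euclidean_space) \<Rightarrow> 'f \<Rightarrow> 'e set \<Rightarrow> 'e \<Rightarrow> 'f \<Rightarrow> bool" where
  "dual_optimal A b K c y \<longleftrightarrow>
     adjoint A y - c \<in> dual_cone K \<and>
     (\<forall>y'. adjoint A y' - c \<in> dual_cone K \<longrightarrow> b \<bullet> y \<le> b \<bullet> y')"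

definition strictly_complementary ::
  "('e::euclidean_space \<Rightarrow> 'f::euclidean_space) \<Rightarrow> 'f \<Rightarrow> 'e set \<Rightarrow> 'e \<Rightarrow> 'e \<Rightarrow> 'f \<Rightarrow> bool" where
  "strictly_complementary A b K c x y \<longleftrightarrow>
     primal_optimal A b K c x \<and> dual_optimal A b K c y \<and>
     (\<exists>F. F face_of K \<and> x \<in> rel_interior F \<and>
          adjoint A y - c \<in> rel_interior (dual_cone K \<inter> orth F))"

end

theory Submission
  imports Defs
begin


lemma face_relint:
  fixes S :: "'a::euclidean_space set"
  assumes "convex S" "x \<in> S"
  shows "\<exists>F. F face_of S \<and> x \<in> rel_interior F"
  using assms
proof (induction "nat (aff_dim S + 1)" arbitrary: S rule: less_induct)
  case less
  show ?case
  proof (cases "x \<in> rel_interior S")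
    case True
    then show ?thesis using face_of_refl[OF less.prems(1)] by blast
  next
    case False
    obtain a where a: "a \<noteq> 0" "\<And>y. y \<in> S \<Longrightarrow> a \<bullet> x \<le> a \<bullet> y"
      "\<And>y. y \<in> rel_interior S \<Longrightarrow> a \<bullet> x < a \<bullet> y"
      using supporting_hyperplane_rel_boundary[OF less.prems False] by blast
    define T where "T = S \<inter> {y. a \<bullet> y = a \<bullet> x}"
    have T: "T face_of S" unfolding T_def
      by (rule face_of_Int_supporting_hyperplane_ge) (use less.prems a in auto)
    have "rel_interior S \<noteq> {}" using less.prems rel_interior_eq_empty by blast
    then have "T \<noteq> S" unfolding T_def using a(3) rel_interior_subset by force
    then have "aff_dim T < aff_dim S" using face_of_aff_dim_lt[OF less.prems(1) T] by simp
    moreover have "aff_dim T \<ge> -1" by (simp add: aff_dim_geq)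
    ultimately have "nat (aff_dim T + 1) < nat (aff_dim S + 1)" by linarith
    moreover have "convex T" using T face_of_imp_convex by blast
    moreover have "x \<in> T" using less.prems unfolding T_def by auto
    ultimately obtain F where "F face_of T" "x \<in> rel_interior F" using less.hyps by blast
    then show ?thesis using face_of_trans T by blast
  qed
qed

lemma dual_dual:
  fixes K :: "'a::euclidean_space set"
  assumes "closed K" "convex K" "conic K" "K \<noteq> {}"
    and "\<And>s. s \<in> dual_cone K \<Longrightarrow> x \<bullet> s \<ge> 0"
  shows "x \<in> K"
proof (rule ccontr)
  assume "x \<notin> K"
  then obtain a c where ac: "a \<bullet> x < c" "\<forall>y\<in>K. c < a \<bullet> y"
    using separating_hyperplane_closed_point[OF assms(2,1)] by blast
  obtain k where "k \<in> K" using assms(4) by blast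
  then have "0 \<in> K" using conicD[OF assms(3), of k 0] by simp
  then have c0: "c < 0" using ac by force
  have "a \<in> dual_cone K"
    unfolding dual_cone_def
  proof (clarify, rule ccontr)
    fix y assume y: "y \<in> K" "\<not> 0 \<le> a \<bullet> y"
    define t where "t = c / (a \<bullet> y)"
    have "t \<ge> 0" using c0 y by (simp add: t_def divide_nonpos_neg)
    then have "t *\<^sub>R y \<in> K" using conicD[OF assms(3) y(1)] by blast
    then have "c < a \<bullet> (t *\<^sub>R y)" using ac by blast
    moreover have "a \<bullet> (t *\<^sub>R y) = c" using y by (simp add: t_def)
    ultimately show False by simp
  qed
  then have "x \<bullet> a \<ge> 0" using assms(5) by blast
  then show False using ac c0 by (simp add: inner_commute)
qed

lemma relint_vanish:
  fixes F :: "'a::euclidean_space set"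
  assumes "xb \<in> rel_interior F" "\<And>z. z \<in> F \<Longrightarrow> s \<bullet> z \<ge> 0" "s \<bullet> xb = 0" "z \<in> F"
  shows "s \<bullet> z = 0"
proof (rule ccontr)
  assume ne: "s \<bullet> z \<noteq> 0"
  then have pos: "s \<bullet> z > 0" using assms(2,4) by force
  obtain e where e: "e > 0" "ball xb e \<inter> affine hull F \<subseteq> F"
    using assms(1) mem_rel_interior_ball by blast
  have xbF: "xb \<in> F" using assms(1) rel_interior_subset by blast
  have zx: "z \<noteq> xb" using ne assms(3) by auto
  define d where "d = e / (2 * norm (z - xb))"
  have d: "d > 0" using e zx by (simp add: d_def)
  define p where "p = xb - d *\<^sub>R (z - xb)"
  have "p \<in> affine hull F"
  proof -
    have "p = (1 + d) *\<^sub>R xb + (- d) *\<^sub>R z" by (simp add: p_def scaleR_diff_right scaleR_add_left)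
    moreover have "xb \<in> affine hull F" "z \<in> affine hull F" by (rule hull_inc[OF xbF], rule hull_inc[OF assms(4)])
    ultimately show ?thesis
      using mem_affine[OF affine_affine_hull, of xb F z "1+d" "-d"] by simp
  qed
  moreover have "dist xb p < e"
  proof -
    have "dist xb p = d * norm (z - xb)" using d by (simp add: p_def dist_norm)
    also have "\<dots> = e/2" using zx by (simp add: d_def)
    finally show ?thesis using e by simp
  qed
  ultimately have "p \<in> F" using e(2) by (auto simp: dist_commute)
  then have "s \<bullet> p \<ge> 0" using assms(2) by blast
  moreover have "s \<bullet> p = - d * (s \<bullet> z)" using assms(3) by (simp add: p_def inner_diff_right)
  ultimately show False using mult_pos_pos[OF d pos] by linarith
qed



lemma dual_cone_eq: "dual_cone K = (\<Inter>x\<in>K. {s. x \<bullet> s \<ge> 0})"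
  by (auto simp: dual_cone_def inner_commute)

lemma closed_dual_cone: "closed (dual_cone K)"
  unfolding dual_cone_eq by (intro closed_INT ballI closed_halfspace_ge)

lemma convex_dual_cone: "convex (dual_cone K)"
  unfolding dual_cone_eq by (intro convex_INT convex_halfspace_ge)

lemma conic_dual_cone: "conic (dual_cone K)"
  unfolding conic_def dual_cone_def by auto

lemma zero_dual_cone: "0 \<in> dual_cone K"
  unfolding dual_cone_def by auto

lemma orth_eq: "orth F = (\<Inter>x\<in>F. {s. x \<bullet> s = 0})"
  by (auto simp: orth_def inner_commute)

lemma convex_orth: "convex (orth F)"
  unfolding orth_eq by (intro convex_INT convex_hyperplane)

lemma polar_eq: "polar C = (\<Inter>x\<in>C. {y. x \<bullet> y \<le> 1})"
  by (auto simp: polar_def inner_commute)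

lemma convex_polar: "convex (polar C)"
  unfolding polar_eq by (intro convex_INT convex_halfspace_le)

locale setting =
  fixes K :: "'e::euclidean_space set" and A :: "'e \<Rightarrow> 'f::euclidean_space" and b :: 'f
  assumes clK: "closed K" and cvK: "convex K" and cnK: "conic K"
    and pt: "K \<inter> uminus ` K = {0}"
    and intK: "interior K \<noteq> {}"
    and lin: "linear A"
    and slater: "{x \<in> K. A x = b} \<inter> interior K \<noteq> {}"
    and cpt: "compact {x \<in> K. A x = b}"
begin

abbreviation "C \<equiv> {x \<in> K. A x = b}"
abbreviation "P \<equiv> polar C"
abbreviation "A' \<equiv> adjoint A"

lemma adj: "x \<bullet> A' w = A x \<bullet> w"
  using adjoint_works[OF lin] by blast

lemma linA': "linear A'" using adjoint_linear[OF lin] .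

lemma K_ne: "K \<noteq> {}" using intK interior_subset by blast

lemma zero_K: "0 \<in> K"
proof -
  obtain k where "k \<in> K" using K_ne by blast
  then show ?thesis using conicD[OF cnK, of k 0] by simp
qed

lemma add_K: assumes "x \<in> K" "y \<in> K" shows "x + y \<in> K"
proof -
  have "(1/2) *\<^sub>R x + (1/2) *\<^sub>R y \<in> K" using convexD[OF cvK assms, of "1/2" "1/2"] by simp
  then have "2 *\<^sub>R ((1/2) *\<^sub>R x + (1/2) *\<^sub>R y) \<in> K" using conicD[OF cnK] by simp
  then show ?thesis by (simp add: scaleR_add_right)
qed

lemma x0_ex: obtains x0 r where "x0 \<in> C" "r > 0" "cball x0 r \<subseteq> K"
proof -
  obtain x0 where x0: "x0 \<in> C" "x0 \<in> interior K" using slater by blast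
  then obtain r where "r > 0" "cball x0 r \<subseteq> K" using mem_interior_cball by blast
  then show ?thesis using that x0 by blast
qed

lemma C_bounded_ex: "\<exists>M>0. \<forall>x\<in>C. norm x \<le> M"
proof -
  obtain M where M: "\<forall>x\<in>C. norm x \<le> M" using compact_imp_bounded[OF cpt] bounded_iff by blast
  then have "\<forall>x\<in>C. norm x \<le> max M 1" by fastforce
  then show ?thesis by (intro exI[of _ "max M 1"]) simp
qed

lemma kerA: assumes "x \<in> K" "A x = 0" shows "x = 0"
proof (rule ccontr)
  assume nz: "x \<noteq> 0"
  obtain x0 r where x0: "x0 \<in> C" "r > 0" "cball x0 r \<subseteq> K" by (rule x0_ex)
  obtain M where M: "M > 0" "\<And>x. x \<in> C \<Longrightarrow> norm x \<le> M" using C_bounded_ex by blast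
  define t where "t = (M + norm x0 + 1) / norm x"
  have tpos: "t \<ge> 0" unfolding t_def by (rule divide_nonneg_pos) (use M(1) nz in auto)
  have "t *\<^sub>R x \<in> K" using conicD[OF cnK assms(1) tpos] .
  then have "x0 + t *\<^sub>R x \<in> K" using add_K x0(1) by blast
  moreover have "A (x0 + t *\<^sub>R x) = b" using x0(1) assms(2) linear_add[OF lin] linear_scale[OF lin] by simp
  ultimately have "norm (x0 + t *\<^sub>R x) \<le> M" using M(2) by blast
  moreover have "norm (t *\<^sub>R x) = M + norm x0 + 1" using nz M tpos by (simp add: t_def)
  moreover have "norm (t *\<^sub>R x) \<le> norm (x0 + t *\<^sub>R x) + norm x0"
    using norm_triangle_ineq4[of "x0 + t *\<^sub>R x" x0] by simp
  ultimately show False by linarith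
qed

lemma b_ne: "b \<noteq> 0"
proof
  assume b0: "b = 0"
  obtain x0 where x0: "x0 \<in> C" "x0 \<in> interior K" using slater by blast
  have "x0 = 0" using kerA x0(1) b0 by simp
  then obtain e where e: "e > 0" "ball 0 e \<subseteq> K" using x0(2) mem_interior by blast
  obtain u :: 'e where u: "u \<in> Basis" using nonempty_Basis by blast
  then have nu: "norm u = 1" by simp
  define v where "v = (e/2) *\<^sub>R u"
  have nv: "norm v = e/2" using e nu by (simp add: v_def)
  have "v \<in> K" "-v \<in> K" using e nv by (auto intro!: subsetD[OF e(2)])
  then have "v \<in> K \<inter> uminus ` K" by (metis IntI image_eqI minus_minus)
  then have "v = 0" using pt by blast
  then show False using nv e by simp
qed

lemma dual_bound:
  assumes "x0 \<in> C" "r > 0" "cball x0 r \<subseteq> K" "s \<in> dual_cone K"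
  shows "r * norm s \<le> s \<bullet> x0"
proof (cases "s = 0")
  case True then show ?thesis by simp
next
  case False
  have "x0 - (r / norm s) *\<^sub>R s \<in> cball x0 r" using assms(2) False by (simp add: dist_norm)
  then have "x0 - (r / norm s) *\<^sub>R s \<in> K" using assms(3) by blast
  then have "0 \<le> s \<bullet> (x0 - (r / norm s) *\<^sub>R s)" using assms(4) by (simp add: dual_cone_def)
  also have "\<dots> = s \<bullet> x0 - r * norm s"
    using False by (simp add: inner_diff_right power2_norm_eq_inner[symmetric] power2_eq_square)
  finally show ?thesis by simp
qed

lemma Gen:
  assumes H: "\<And>w s. b \<bullet> w \<le> 1 \<Longrightarrow> s \<in> dual_cone K \<Longrightarrow> x \<bullet> (A' w - s) \<le> k"
  shows "x \<in> K \<and> (\<exists>\<mu>. A x = \<mu> *\<^sub>R b \<and> 0 \<le> \<mu> \<and> \<mu> \<le> k)"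
proof -
  have xAw: "x \<bullet> A' w = A x \<bullet> w" for w using adj .
  have "x \<bullet> s \<ge> 0" if s: "s \<in> dual_cone K" for s
  proof (rule ccontr)
    assume neg: "\<not> x \<bullet> s \<ge> 0"
    define t where "t = (\<bar>k\<bar> + 1) / (- (x \<bullet> s))"
    have t: "t \<ge> 0" unfolding t_def by (rule divide_nonneg_pos) (use neg in auto)
    have "t *\<^sub>R s \<in> dual_cone K" using conicD[OF conic_dual_cone s t] .
    then have "x \<bullet> (A' 0 - t *\<^sub>R s) \<le> k" using H[of 0] by simp
    moreover have "x \<bullet> (A' 0 - t *\<^sub>R s) = \<bar>k\<bar> + 1"
      using neg linear_0[OF linA'] by (simp add: t_def)
    ultimately show False by linarith
  qed
  then have xK: "x \<in> K" using dual_dual[OF clK cvK cnK K_ne] by blast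
  have H0: "A x \<bullet> w \<le> k" if "b \<bullet> w \<le> 1" for w
    using H[OF that zero_dual_cone] xAw by simp
  define \<mu> where "\<mu> = (A x \<bullet> b) / (b \<bullet> b)"
  have bb: "b \<bullet> b > 0" using b_ne by simp
  define d where "d = A x - \<mu> *\<^sub>R b"
  have db: "d \<bullet> b = 0" using bb by (simp add: d_def \<mu>_def inner_diff_left)
  have "d = 0"
  proof (rule ccontr)
    assume "d \<noteq> 0"
    then have dd: "d \<bullet> d > 0" by simp
    define t where "t = (\<bar>k\<bar> + 1) / (d \<bullet> d)"
    have "b \<bullet> (t *\<^sub>R d) \<le> 1" using db by (simp add: inner_commute)
    then have "A x \<bullet> (t *\<^sub>R d) \<le> k" by (rule H0)
    moreover have "A x \<bullet> (t *\<^sub>R d) = t * (d \<bullet> d)"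
    proof -
      have "A x = d + \<mu> *\<^sub>R b" by (simp add: d_def)
      moreover have "b \<bullet> d = 0" using db by (simp add: inner_commute)
      ultimately show ?thesis using db by (simp add: inner_add_left inner_add_right)
    qed
    moreover have "t * (d \<bullet> d) = \<bar>k\<bar> + 1" using dd by (simp add: t_def)
    ultimately show False by linarith
  qed
  then have Ax: "A x = \<mu> *\<^sub>R b" by (simp add: d_def)
  have mu0: "\<mu> \<ge> 0"
  proof (rule ccontr)
    assume neg: "\<not> \<mu> \<ge> 0"
    define t where "t = (\<bar>k\<bar> + 1) / (- \<mu> * (b \<bullet> b))"
    have "- \<mu> * (b \<bullet> b) > 0" using mult_pos_pos[of "-\<mu>" "b \<bullet> b"] neg bb by linarith
    then have tp: "t > 0" unfolding t_def by (intro divide_pos_pos) auto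
    have "0 \<le> t * (b \<bullet> b)" using tp bb by simp
    then have "b \<bullet> (- t *\<^sub>R b) \<le> 1" by simp
    then have "A x \<bullet> (- t *\<^sub>R b) \<le> k" by (rule H0)
    moreover have "A x \<bullet> (- t *\<^sub>R b) = \<bar>k\<bar> + 1"
      using Ax neg bb by (simp add: t_def)
    ultimately show False by linarith
  qed
  have "b \<bullet> ((1 / (b \<bullet> b)) *\<^sub>R b) \<le> 1" using bb by simp
  then have "A x \<bullet> ((1 / (b \<bullet> b)) *\<^sub>R b) \<le> k" by (rule H0)
  then have "\<mu> \<le> k" using Ax bb by simp
  then show ?thesis using xK Ax mu0 by blast
qed

lemma P_iff: "y \<in> P \<longleftrightarrow> (\<forall>x\<in>C. y \<bullet> x \<le> 1)"
  by (simp add: polar_def)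

lemma C_ne: "C \<noteq> {}" using slater by blast

lemma strict_rep:
  assumes zl: "\<And>x. x \<in> C \<Longrightarrow> z \<bullet> x \<le> l" and l1: "l < 1"
  shows "\<exists>w s. b \<bullet> w \<le> 1 \<and> s \<in> dual_cone K \<and> z = A' w - s"
proof (rule ccontr)
  assume nz: "\<not> ?thesis"
  define S where "S = {A' w - s - z | w s. b \<bullet> w \<le> 1 \<and> s \<in> dual_cone K}"
  have cS: "convex S"
  proof (rule convexI)
    fix p q :: 'e and u v :: real
    assume pq: "p \<in> S" "q \<in> S" and uv: "0 \<le> u" "0 \<le> v" "u + v = 1"
    obtain w1 s1 where 1: "p = A' w1 - s1 - z" "b \<bullet> w1 \<le> 1" "s1 \<in> dual_cone K"
      using pq(1) unfolding S_def by blast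
    obtain w2 s2 where 2: "q = A' w2 - s2 - z" "b \<bullet> w2 \<le> 1" "s2 \<in> dual_cone K"
      using pq(2) unfolding S_def by blast
    have "u *\<^sub>R p + v *\<^sub>R q = u *\<^sub>R (A' w1 - s1 - z) + v *\<^sub>R (A' w2 - s2 - z)"
      using 1(1) 2(1) by simp
    also have "\<dots> = A' (u *\<^sub>R w1 + v *\<^sub>R w2) - (u *\<^sub>R s1 + v *\<^sub>R s2) - (u + v) *\<^sub>R z"
      by (simp add: linear_add[OF linA'] linear_scale[OF linA'] algebra_simps)
    also have "\<dots> = A' (u *\<^sub>R w1 + v *\<^sub>R w2) - (u *\<^sub>R s1 + v *\<^sub>R s2) - z" using uv by simp
    finally have eq: "u *\<^sub>R p + v *\<^sub>R q = A' (u *\<^sub>R w1 + v *\<^sub>R w2) - (u *\<^sub>R s1 + v *\<^sub>R s2) - z" .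
    have "b \<bullet> (u *\<^sub>R w1 + v *\<^sub>R w2) = u * (b \<bullet> w1) + v * (b \<bullet> w2)" by (simp add: inner_add_right)
    also have "\<dots> \<le> u * 1 + v * 1"
      using 1(2) 2(2) uv by (intro add_mono mult_left_mono) auto
    finally have bw: "b \<bullet> (u *\<^sub>R w1 + v *\<^sub>R w2) \<le> 1" using uv by simp
    have "u *\<^sub>R s1 + v *\<^sub>R s2 \<in> dual_cone K" using convexD[OF convex_dual_cone 1(3) 2(3) uv] .
    then show "u *\<^sub>R p + v *\<^sub>R q \<in> S" unfolding S_def using eq bw by blast
  qed
  have "0 \<notin> S" using nz unfolding S_def by force
  then obtain a where a: "a \<noteq> 0" "\<forall>p\<in>S. 0 \<le> a \<bullet> p"
    using separating_hyperplane_set_0[OF cS] by blast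
  define x where "x = - a"
  have H: "x \<bullet> (A' w - s) \<le> x \<bullet> z" if "b \<bullet> w \<le> 1" "s \<in> dual_cone K" for w s
  proof -
    have "A' w - s - z \<in> S" unfolding S_def using that by blast
    then have "0 \<le> a \<bullet> (A' w - s - z)" using a(2) by blast
    then show ?thesis by (simp add: x_def inner_diff_right)
  qed
  obtain \<mu> where xK: "x \<in> K" and mu: "A x = \<mu> *\<^sub>R b" "0 \<le> \<mu>" "\<mu> \<le> x \<bullet> z"
    using Gen[OF H] by blast
  show False
  proof (cases "\<mu> = 0")
    case True
    then have "x = 0" using kerA[OF xK] mu(1) by simp
    then show False using a(1) by (simp add: x_def)
  next
    case False
    then have mp: "\<mu> > 0" using mu(2) by simp
    have "(1/\<mu>) *\<^sub>R x \<in> K" using conicD[OF cnK xK] mp by simp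
    moreover have "A ((1/\<mu>) *\<^sub>R x) = b" using mu(1) mp linear_scale[OF lin] by simp
    ultimately have "z \<bullet> ((1/\<mu>) *\<^sub>R x) \<le> l" using zl by blast
    then have "(z \<bullet> x) / \<mu> \<le> l" by simp
    then have "z \<bullet> x \<le> l * \<mu>" using mp by (simp add: divide_le_eq)
    moreover have "l * \<mu> < \<mu>" using l1 mp by simp
    ultimately show False using mu(3) by (simp add: inner_commute)
  qed
qed

lemma rep:
  assumes zP: "z \<in> P"
  shows "\<exists>w s. b \<bullet> w \<le> 1 \<and> s \<in> dual_cone K \<and> z = A' w - s"
proof -
  obtain x0 r where x0: "x0 \<in> C" "r > 0" "cball x0 r \<subseteq> K" by (rule x0_ex)
  define R where "R = 1 + norm x0 * norm z"
  define V where "V = range A' \<inter> {v. x0 \<bullet> v \<le> 1}"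
  define Kc where "Kc = dual_cone K \<inter> {s. x0 \<bullet> s \<le> R}"
  have clV: "closed V" unfolding V_def
    by (intro closed_Int closed_subspace linear_subspace_image[OF linA'] subspace_UNIV closed_halfspace_le)
  have clKc: "closed Kc" unfolding Kc_def
    by (intro closed_Int closed_dual_cone closed_halfspace_le)
  have "bounded Kc"
    unfolding bounded_iff
  proof (intro exI ballI)
    fix s assume s: "s \<in> Kc"
    then have "r * norm s \<le> s \<bullet> x0" using dual_bound[OF x0] unfolding Kc_def by blast
    also have "\<dots> \<le> R" using s unfolding Kc_def by (simp add: inner_commute)
    finally show "norm s \<le> R / r" using x0(2) by (simp add: le_divide_eq mult.commute)
  qed
  then have cKc: "compact Kc" using clKc compact_eq_bounded_closed by blast
  define T where "T = (\<Union>v\<in>V. \<Union>s\<in>Kc. {v - s})"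
  have clT: "closed T" unfolding T_def using closed_compact_differences[OF clV cKc] .
  define lam where "lam n = 1 + - inverse (real (Suc n))" for n
  have inT: "lam n *\<^sub>R z \<in> T" for n
  proof -
    have l0: "0 \<le> lam n" unfolding lam_def by (simp add: inverse_le_1_iff)
    have l1: "lam n < 1" unfolding lam_def by simp
    have "(lam n *\<^sub>R z) \<bullet> x \<le> lam n" if "x \<in> C" for x
    proof -
      have "z \<bullet> x \<le> 1" using zP that by (simp add: P_iff)
      then have "lam n * (z \<bullet> x) \<le> lam n * 1" using l0 by (rule mult_left_mono)
      then show ?thesis by simp
    qed
    then obtain w s where ws: "b \<bullet> w \<le> 1" "s \<in> dual_cone K" "lam n *\<^sub>R z = A' w - s"
      using strict_rep[OF _ l1] by blast
    have vV: "A' w \<in> V" unfolding V_def using ws(1) adj[of x0 w] x0(1) by auto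
    have "norm (lam n *\<^sub>R z) \<le> norm z" using l0 l1 by (simp add: mult_left_le_one_le)
    then have "\<bar>x0 \<bullet> (lam n *\<^sub>R z)\<bar> \<le> norm x0 * norm z"
      using Cauchy_Schwarz_ineq2[of x0 "lam n *\<^sub>R z"] by (meson mult_left_mono norm_ge_zero order_trans)
    moreover have "x0 \<bullet> s = x0 \<bullet> A' w - x0 \<bullet> (lam n *\<^sub>R z)" using ws(3) by (simp add: inner_diff_right)
    moreover have "x0 \<bullet> A' w \<le> 1" using vV unfolding V_def by blast
    ultimately have "x0 \<bullet> s \<le> R" unfolding R_def by linarith
    then have "s \<in> Kc" unfolding Kc_def using ws(2) by blast
    then show ?thesis unfolding T_def using vV ws(3) by blast
  qed
  have "(\<lambda>n. lam n *\<^sub>R z) \<longlonglongrightarrow> 1 *\<^sub>R z"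
    unfolding lam_def by (intro tendsto_scaleR LIMSEQ_inverse_real_of_nat_add_minus tendsto_const)
  then have "z \<in> T" using closed_sequentially[OF clT inT] by simp
  then obtain v s where vs: "v \<in> V" "s \<in> Kc" "z = v - s" unfolding T_def by blast
  then obtain w where w: "v = A' w" unfolding V_def by blast
  have "b \<bullet> w = x0 \<bullet> v" using adj[of x0 w] x0(1) w by simp
  then have "b \<bullet> w \<le> 1" using vs(1) unfolding V_def by simp
  then show ?thesis using vs w unfolding Kc_def by blast
qed

lemma S_sub_P:
  assumes "b \<bullet> w \<le> 1" "s \<in> dual_cone K"
  shows "A' w - s \<in> P"
  unfolding P_iff
proof
  fix x assume x: "x \<in> C"
  have "A' w \<bullet> x = b \<bullet> w" using adj[of x w] x by (simp add: inner_commute)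
  then have "(A' w - s) \<bullet> x = b \<bullet> w - s \<bullet> x" by (simp add: inner_diff_left)
  moreover have "s \<bullet> x \<ge> 0" using assms(2) x by (simp add: dual_cone_def)
  ultimately show "(A' w - s) \<bullet> x \<le> 1" using assms(1) by linarith
qed

lemma interior_P:
  assumes "\<And>x. x \<in> C \<Longrightarrow> y \<bullet> x \<le> m" "m < 1"
  shows "y \<in> interior P"
proof -
  obtain M where M: "M > 0" "\<And>x. x \<in> C \<Longrightarrow> norm x \<le> M" using C_bounded_ex by blast
  have "ball y ((1 - m) / M) \<subseteq> P"
  proof
    fix y' assume y': "y' \<in> ball y ((1 - m) / M)"
    have "y' \<bullet> x \<le> 1" if x: "x \<in> C" for x
    proof -
      have d: "norm (y' - y) < (1 - m) / M" using y' by (simp add: dist_norm norm_minus_commute)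
      have e1: "y' \<bullet> x = y \<bullet> x + (y' - y) \<bullet> x" by (simp add: inner_diff_left)
      have e2: "(y' - y) \<bullet> x \<le> norm (y' - y) * norm x" using Cauchy_Schwarz_ineq2[of "y' - y" x] by linarith
      have e3: "norm (y' - y) * norm x \<le> norm (y' - y) * M" using M(2)[OF x] by (simp add: mult_left_mono)
      have e4: "norm (y' - y) * M < (1 - m)" using d M(1) by (simp add: less_divide_eq)
      show ?thesis using assms(1)[OF x] e1 e2 e3 e4 by linarith
    qed
    then show "y' \<in> P" by (simp add: P_iff)
  qed
  moreover have "(1 - m) / M > 0" using assms(2) M(1) by simp
  ultimately show ?thesis using mem_interior by blast
qed

lemma zero_int_P: "0 \<in> interior P"
  by (rule interior_P[of 0 0]) auto

lemma relint_P: "rel_interior P = interior P"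
  using zero_int_P rel_interior_nonempty_interior by blast

lemma bd_P:
  assumes "y \<in> P" "y \<notin> interior P"
  shows "\<exists>x\<in>C. y \<bullet> x = 1 \<and> (\<forall>x'\<in>C. y \<bullet> x' \<le> 1)"
proof -
  have "continuous_on C (\<lambda>x. y \<bullet> x)" by (intro continuous_intros)
  then obtain x1 where x1: "x1 \<in> C" "\<forall>x\<in>C. y \<bullet> x \<le> y \<bullet> x1"
    using continuous_attains_sup[OF cpt C_ne] by blast
  have le: "\<forall>x'\<in>C. y \<bullet> x' \<le> 1" using assms(1) by (simp add: P_iff)
  have "\<not> y \<bullet> x1 < 1" using interior_P[of y "y \<bullet> x1"] x1 assms(2) by blast
  then have "y \<bullet> x1 = 1" using le x1(1) by force
  then show ?thesis using x1 le by blast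
qed

lemma Rep:
  assumes xb: "xb \<in> C" and F: "F face_of K" "xb \<in> rel_interior F"
  shows "P \<inter> {z. z \<bullet> xb = 1} = A' ` {w. b \<bullet> w = 1} + (*\<^sub>R) (-1) ` (dual_cone K \<inter> orth F)"
proof
  have xbF: "xb \<in> F" using F(2) rel_interior_subset by blast
  show "A' ` {w. b \<bullet> w = 1} + (*\<^sub>R) (-1) ` (dual_cone K \<inter> orth F) \<subseteq> P \<inter> {z. z \<bullet> xb = 1}"
  proof
    fix z assume "z \<in> A' ` {w. b \<bullet> w = 1} + (*\<^sub>R) (-1) ` (dual_cone K \<inter> orth F)"
    then obtain w s where ws: "b \<bullet> w = 1" "s \<in> dual_cone K" "s \<in> orth F" "z = A' w - s"
      by (auto elim!: set_plus_elim)
    have "z \<in> P" using S_sub_P[of w s] ws by simp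
    moreover have "s \<bullet> xb = 0" using ws(3) xbF by (simp add: orth_def)
    moreover have "A' w \<bullet> xb = b \<bullet> w" using adj[of xb w] xb by (simp add: inner_commute)
    ultimately show "z \<in> P \<inter> {z. z \<bullet> xb = 1}" using ws by (simp add: inner_diff_left)
  qed
  show "P \<inter> {z. z \<bullet> xb = 1} \<subseteq> A' ` {w. b \<bullet> w = 1} + (*\<^sub>R) (-1) ` (dual_cone K \<inter> orth F)"
  proof
    fix z assume z: "z \<in> P \<inter> {z. z \<bullet> xb = 1}"
    then obtain w s where ws: "b \<bullet> w \<le> 1" "s \<in> dual_cone K" "z = A' w - s" using rep by blast
    have A'w: "A' w \<bullet> xb = b \<bullet> w" using adj[of xb w] xb by (simp add: inner_commute)
    have s0: "s \<bullet> xb \<ge> 0" using ws(2) xb by (simp add: dual_cone_def)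
    have "z \<bullet> xb = b \<bullet> w - s \<bullet> xb" using ws(3) A'w by (simp add: inner_diff_left)
    then have bw: "b \<bullet> w = 1" and sx: "s \<bullet> xb = 0" using z ws(1) s0 by auto
    have FK: "F \<subseteq> K" using F(1) face_of_imp_subset by blast
    have "s \<in> orth F" unfolding orth_def
    proof (clarify)
      fix y assume "y \<in> F"
      show "s \<bullet> y = 0"
        by (rule relint_vanish[OF F(2) _ sx \<open>y \<in> F\<close>]) (use ws(2) FK in \<open>auto simp: dual_cone_def\<close>)
    qed
    then have 2: "(-1) *\<^sub>R s \<in> (*\<^sub>R) (-1) ` (dual_cone K \<inter> orth F)" using ws(2) by blast
    have "A' w \<in> A' ` {w. b \<bullet> w = 1}" using bw by blast
    from this 2 have "A' w + (-1) *\<^sub>R s \<in> A' ` {w. b \<bullet> w = 1} + (*\<^sub>R) (-1) ` (dual_cone K \<inter> orth F)"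
      by (rule set_plus_intro)
    then show "z \<in> A' ` {w. b \<bullet> w = 1} + (*\<^sub>R) (-1) ` (dual_cone K \<inter> orth F)" using ws(3) by simp
  qed
qed

lemma Rep_relint:
  "rel_interior (A' ` {w. b \<bullet> w = 1} + (*\<^sub>R) (-1) ` (dual_cone K \<inter> orth F))
     = A' ` {w. b \<bullet> w = 1} + (*\<^sub>R) (-1) ` rel_interior (dual_cone K \<inter> orth F)"
proof -
  have cD: "convex (dual_cone K \<inter> orth F)" by (intro convex_Int convex_dual_cone convex_orth)
  have c1: "convex (A' ` {w. b \<bullet> w = 1})" by (intro convex_linear_image linA' convex_hyperplane)
  have c2: "convex ((*\<^sub>R) (-1) ` (dual_cone K \<inter> orth F))" using convex_scaling[OF cD, of "-1"] by simp
  have "affine (A' ` {w. b \<bullet> w = 1})"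
  proof -
    have "A' ` {w. b \<bullet> w = 1} = A' ` (affine hull {w. b \<bullet> w = 1})"
      using affine_hyperplane affine_hull_eq by metis
    also have "\<dots> = affine hull (A' ` {w. b \<bullet> w = 1})"
      by (rule affine_hull_linear_image) (use linA' linear_conv_bounded_linear in blast)
    finally show ?thesis by (metis affine_affine_hull)
  qed
  then have r1: "rel_interior (A' ` {w. b \<bullet> w = 1}) = A' ` {w. b \<bullet> w = 1}" by (rule rel_interior_affine)
  have r2: "rel_interior ((*\<^sub>R) (-1) ` (dual_cone K \<inter> orth F)) = (*\<^sub>R) (-1) ` rel_interior (dual_cone K \<inter> orth F)"
    using rel_interior_scaleR[of "-1" "dual_cone K \<inter> orth F"] by simp
  show ?thesis using rel_interior_sum[OF c1 c2] r1 r2 by simp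
qed

end


context setting
begin

lemma D_scale:
  assumes "t > 0"
  shows "(*\<^sub>R) t ` (dual_cone K \<inter> orth F) = dual_cone K \<inter> orth F"
proof
  show "(*\<^sub>R) t ` (dual_cone K \<inter> orth F) \<subseteq> dual_cone K \<inter> orth F"
    using assms by (auto simp: dual_cone_def orth_def)
  show "dual_cone K \<inter> orth F \<subseteq> (*\<^sub>R) t ` (dual_cone K \<inter> orth F)"
  proof
    fix s assume s: "s \<in> dual_cone K \<inter> orth F"
    have "(1/t) *\<^sub>R s \<in> dual_cone K \<inter> orth F" using s assms by (auto simp: dual_cone_def orth_def)
    moreover have "s = t *\<^sub>R ((1/t) *\<^sub>R s)" using assms by simp
    ultimately show "s \<in> (*\<^sub>R) t ` (dual_cone K \<inter> orth F)" by blast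
  qed
qed

lemma dirA:
  assumes fe: "facially_exposed P" and c: "\<exists>x\<in>C. c \<bullet> x > 0"
  shows "\<exists>x y. strictly_complementary A b K c x y"
proof -
  have "continuous_on C (\<lambda>x. c \<bullet> x)" by (intro continuous_intros)
  then obtain x1 where x1: "x1 \<in> C" "\<forall>x\<in>C. c \<bullet> x \<le> c \<bullet> x1"
    using continuous_attains_sup[OF cpt C_ne] by blast
  define t where "t = c \<bullet> x1"
  have tp: "t > 0" using c x1 unfolding t_def by force
  define y where "y = (1/t) *\<^sub>R c"
  have cy: "c = t *\<^sub>R y" using tp by (simp add: y_def)
  have yx: "y \<bullet> x = (c \<bullet> x) / t" for x by (simp add: y_def)
  have yP: "y \<in> P" unfolding P_iff using x1 tp by (simp add: yx t_def divide_le_eq)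
  have yx1: "y \<bullet> x1 = 1" using tp by (simp add: yx t_def)
  have x1nz: "x1 \<noteq> 0" using x1(1) b_ne linear_0[OF lin] by auto
  have ynint: "y \<notin> interior P"
  proof
    assume "y \<in> interior P"
    then obtain e where e: "e > 0" "ball y e \<subseteq> P" using mem_interior by blast
    define y' where "y' = y + (e / 2 / norm x1) *\<^sub>R x1"
    have "dist y y' = e/2" using x1nz e by (simp add: y'_def dist_norm)
    then have "y' \<in> P" using e by auto
    then have "y' \<bullet> x1 \<le> 1" using x1(1) by (simp add: P_iff)
    moreover have "y' \<bullet> x1 = 1 + e/2 * norm x1"
      using yx1 x1nz by (simp add: y'_def inner_add_left dot_square_norm power2_eq_square)
    moreover have "e/2 * norm x1 > 0" using e x1nz by simp
    ultimately show False by linarith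
  qed
  obtain G where G: "G face_of P" "y \<in> rel_interior G"
    using face_relint[OF convex_polar yP] by blast
  then have "G exposed_face_of P" using fe unfolding facially_exposed_def by blast
  then obtain a \<beta> where ab: "P \<subseteq> {z. a \<bullet> z \<le> \<beta>}" "G = P \<inter> {z. a \<bullet> z = \<beta>}"
    unfolding exposed_face_of_def by blast
  have GP: "G \<noteq> P" using G(2) ynint relint_P by auto
  have yG: "y \<in> G" using G(2) rel_interior_subset by blast
  have anz: "a \<noteq> 0"
  proof
    assume "a = 0"
    then have "\<beta> = 0" using yG ab(2) by (cases "\<beta> = 0") auto
    then show False using GP ab(2) \<open>a = 0\<close> by auto
  qed
  have bpos: "\<beta> > 0"
  proof -
    obtain e where e: "e > 0" "ball 0 e \<subseteq> P" using zero_int_P mem_interior by blast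
    define p where "p = (e / 2 / norm a) *\<^sub>R a"
    have "norm p = e/2" using anz e by (simp add: p_def)
    then have "p \<in> P" using e by auto
    then have "a \<bullet> p \<le> \<beta>" using ab(1) by blast
    moreover have "a \<bullet> p = e/2 * norm a"
      using anz by (simp add: p_def dot_square_norm power2_eq_square)
    moreover have "e/2 * norm a > 0" using e anz by simp
    ultimately show ?thesis by linarith
  qed
  define xb where "xb = (1/\<beta>) *\<^sub>R a"
  have xbz: "xb \<bullet> z = (a \<bullet> z) / \<beta>" for z by (simp add: xb_def)
  have xbP: "xb \<bullet> z \<le> 1" if "z \<in> P" for z
    using ab(1) that bpos by (auto simp: xbz divide_le_eq)
  have H: "xb \<bullet> (A' w - s) \<le> 1" if "b \<bullet> w \<le> 1" "s \<in> dual_cone K" for w s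
    using xbP[OF S_sub_P[OF that]] .
  obtain \<mu> where xbK: "xb \<in> K" and mu: "A xb = \<mu> *\<^sub>R b" "0 \<le> \<mu>" "\<mu> \<le> 1"
    using Gen[OF H] by blast
  have yxb: "y \<bullet> xb = 1" using yG ab(2) bpos by (simp add: xbz inner_commute)
  have "\<mu> \<noteq> 0"
  proof
    assume "\<mu> = 0"
    then have "xb = 0" using kerA[OF xbK] mu(1) by simp
    then show False using yxb by simp
  qed
  then have mp: "\<mu> > 0" using mu(2) by simp
  have "(1/\<mu>) *\<^sub>R xb \<in> K" using conicD[OF cnK xbK] mp by simp
  moreover have "A ((1/\<mu>) *\<^sub>R xb) = b" using mu(1) mp linear_scale[OF lin] by simp
  ultimately have "y \<bullet> ((1/\<mu>) *\<^sub>R xb) \<le> 1" using yP unfolding P_iff by blast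
  then have "1 / \<mu> \<le> 1" using yxb by simp
  then have "\<mu> = 1" using mp mu(3) by (simp add: divide_le_eq)
  then have xbC: "xb \<in> C" using xbK mu(1) by simp
  have iff: "z \<bullet> xb = 1 \<longleftrightarrow> a \<bullet> z = \<beta>" for z
  proof -
    have "z \<bullet> xb = (a \<bullet> z) / \<beta>" using xbz[of z] by (simp add: inner_commute)
    moreover have "(a \<bullet> z) / \<beta> = 1 \<longleftrightarrow> a \<bullet> z = \<beta>" using bpos by (metis divide_eq_1_iff less_irrefl)
    ultimately show ?thesis by simp
  qed
  have Geq: "G = P \<inter> {z. z \<bullet> xb = 1}"
    using ab(2) iff by auto
  have popt: "primal_optimal A b K c xb"
    unfolding primal_optimal_def
  proof (intro conjI allI impI)
    show "xb \<in> K" "A xb = b" using xbC by auto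
    fix x' assume "x' \<in> K \<and> A x' = b"
    then have "y \<bullet> x' \<le> 1" using yP by (simp add: P_iff)
    then show "c \<bullet> x' \<le> c \<bullet> xb" using tp yxb by (simp add: cy)
  qed
  obtain F where F: "F face_of K" "xb \<in> rel_interior F"
    using face_relint[OF cvK xbK] by blast
  define D where "D = dual_cone K \<inter> orth F"
  have "y \<in> rel_interior (A' ` {w. b \<bullet> w = 1} + (*\<^sub>R) (-1) ` D)"
    using G(2) Geq Rep[OF xbC F] unfolding D_def by simp
  then have "y \<in> A' ` {w. b \<bullet> w = 1} + (*\<^sub>R) (-1) ` rel_interior D"
    using Rep_relint unfolding D_def by simp
  then obtain w s' where ws: "b \<bullet> w = 1" "s' \<in> rel_interior D" "y = A' w + (-1) *\<^sub>R s'"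
    by (auto elim!: set_plus_elim)
  define yb where "yb = t *\<^sub>R w"
  define s where "s = t *\<^sub>R s'"
  have e: "A' w - y = s'" using ws(3) by simp
  have "A' yb - c = t *\<^sub>R (A' w - y)"
    unfolding yb_def cy by (simp add: linear_scale[OF linA'] scaleR_diff_right)
  then have sdef: "A' yb - c = s" using e by (simp add: s_def)
  have s1: "s \<in> (*\<^sub>R) t ` rel_interior D" unfolding s_def using ws(2) by (rule imageI)
  have "(*\<^sub>R) t ` rel_interior D = rel_interior ((*\<^sub>R) t ` D)"
    by (rule rel_interior_scaleR) (use tp in simp)
  also have "(*\<^sub>R) t ` D = D" unfolding D_def by (rule D_scale[OF tp])
  finally have srel: "s \<in> rel_interior D" using s1 by simp
  then have sD: "s \<in> D" using rel_interior_subset by blast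
  have xbF: "xb \<in> F" using F(2) rel_interior_subset by blast
  have sxb: "s \<bullet> xb = 0" using sD xbF by (simp add: D_def orth_def)
  have dopt: "dual_optimal A b K c yb"
    unfolding dual_optimal_def
  proof (intro conjI allI impI)
    show "A' yb - c \<in> dual_cone K" using sD sdef by (simp add: D_def)
    fix y' assume y': "A' y' - c \<in> dual_cone K"
    have "0 \<le> (A' y' - c) \<bullet> xb" using y' xbK by (simp add: dual_cone_def)
    moreover have "A' y' \<bullet> xb = b \<bullet> y'" using adj[of xb y'] xbC by (simp add: inner_commute)
    moreover have "A' yb \<bullet> xb = b \<bullet> yb" using adj[of xb yb] xbC by (simp add: inner_commute)
    moreover have "(A' yb - c) \<bullet> xb = 0" using sdef sxb by simp
    ultimately show "b \<bullet> yb \<le> b \<bullet> y'" by (simp add: inner_diff_left)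
  qed
  have "strictly_complementary A b K c xb yb"
    unfolding strictly_complementary_def
  proof (intro conjI popt dopt exI[of _ F])
    show "F face_of K" "xb \<in> rel_interior F" using F by auto
    show "A' yb - c \<in> rel_interior (dual_cone K \<inter> orth F)" using srel sdef D_def by simp
  qed
  then show ?thesis by blast
qed

lemma dirB:
  assumes SC: "\<And>c. \<exists>x\<in>C. c \<bullet> x > 0 \<Longrightarrow> \<exists>x y. strictly_complementary A b K c x y"
  shows "facially_exposed P"
  unfolding facially_exposed_def
proof (intro allI impI)
  fix G assume G: "G face_of P"
  show "G exposed_face_of P"
  proof (cases "G = {} \<or> G = P")
    case True
    then show ?thesis using convex_polar by auto
  next
    case False
    then have Gne: "G \<noteq> {}" and GP: "G \<noteq> P" by auto
    have "convex G" using G face_of_imp_convex by blast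
    then obtain y where y: "y \<in> rel_interior G" using Gne rel_interior_eq_empty by blast
    have yG: "y \<in> G" using y rel_interior_subset by blast
    have yP: "y \<in> P" using yG G face_of_imp_subset by blast
    have "y \<in> rel_frontier P" using face_of_subset_rel_frontier[OF G GP] yG by blast
    then have ynint: "y \<notin> interior P" using relint_P by (simp add: rel_frontier_def)
    obtain x1 where x1: "x1 \<in> C" "y \<bullet> x1 = 1" "\<forall>x'\<in>C. y \<bullet> x' \<le> 1"
      using bd_P[OF yP ynint] by blast
    have "\<exists>x\<in>C. y \<bullet> x > 0" using x1 by force
    then obtain xb yb where "strictly_complementary A b K y xb yb" using SC by blast
    then obtain F where po: "primal_optimal A b K y xb" and F: "F face_of K" "xb \<in> rel_interior F"
      and srel: "A' yb - y \<in> rel_interior (dual_cone K \<inter> orth F)"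
      unfolding strictly_complementary_def by blast
    have xbC: "xb \<in> C" using po unfolding primal_optimal_def by blast
    have "y \<bullet> x1 \<le> y \<bullet> xb" using po x1(1) unfolding primal_optimal_def by blast
    then have yxb: "y \<bullet> xb = 1" using x1 xbC by force
    define s where "s = A' yb - y"
    have sD: "s \<in> dual_cone K \<inter> orth F" using srel rel_interior_subset unfolding s_def by blast
    have xbF: "xb \<in> F" using F(2) rel_interior_subset by blast
    have sxb: "s \<bullet> xb = 0" using sD xbF by (simp add: orth_def)
    have "A' yb \<bullet> xb = b \<bullet> yb" using adj[of xb yb] xbC by (simp add: inner_commute)
    moreover have "A' yb = y + s" by (simp add: s_def)
    ultimately have byb: "b \<bullet> yb = 1" using yxb sxb by (simp add: inner_add_left)
    have m1: "A' yb \<in> A' ` {w. b \<bullet> w = 1}" using byb by blast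
    have m2: "(-1) *\<^sub>R s \<in> (*\<^sub>R) (-1) ` rel_interior (dual_cone K \<inter> orth F)"
      using srel unfolding s_def by (rule imageI)
    have mem: "A' yb + (-1) *\<^sub>R s \<in> A' ` {w. b \<bullet> w = 1} + (*\<^sub>R) (-1) ` rel_interior (dual_cone K \<inter> orth F)"
      using m1 m2 by (rule set_plus_intro)
    have yeq: "A' yb + (-1) *\<^sub>R s = y" by (simp add: s_def)
    have yin: "y \<in> rel_interior (P \<inter> {z. z \<bullet> xb = 1})"
      unfolding Rep[OF xbC F] Rep_relint using mem[unfolded yeq] .
    have E: "(P \<inter> {z. z \<bullet> xb = 1}) exposed_face_of P"
    proof -
      have "(P \<inter> {z. xb \<bullet> z = 1}) exposed_face_of P"
      proof (rule exposed_face_of_Int_supporting_hyperplane_le[OF convex_polar])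
        fix z assume "z \<in> P"
        then have "z \<bullet> xb \<le> 1" using xbC unfolding P_iff by blast
        then show "xb \<bullet> z \<le> 1" by (simp add: inner_commute)
      qed
      moreover have "{z. xb \<bullet> z = 1} = {z. z \<bullet> xb = 1}" by (auto simp: inner_commute)
      ultimately show ?thesis by simp
    qed
    have Ef: "(P \<inter> {z. z \<bullet> xb = 1}) face_of P" using E unfolding exposed_face_of_def by blast
    have "G = P \<inter> {z. z \<bullet> xb = 1}"
      by (rule face_of_eq[OF G Ef]) (use y yin in blast)
    then show ?thesis using E by simp
  qed
qed

lemma hull_polar: "c \<notin> polar (convex_cone hull C) \<longleftrightarrow> (\<exists>x\<in>C. c \<bullet> x > 0)"
proof
  assume nin: "c \<notin> polar (convex_cone hull C)"
  show "\<exists>x\<in>C. c \<bullet> x > 0"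
  proof (rule ccontr)
    assume "\<not> ?thesis"
    then have sub: "C \<subseteq> {x. c \<bullet> x \<le> 0}" by (auto simp: not_less)
    have hs: "convex_cone hull C \<subseteq> {x. c \<bullet> x \<le> 0}"
      by (rule hull_minimal[where S=convex_cone, OF sub convex_cone_halfspace_le])
    have "\<forall>u\<in>convex_cone hull C. c \<bullet> u \<le> 1"
    proof
      fix u assume "u \<in> convex_cone hull C"
      then have "c \<bullet> u \<le> 0" using hs by blast
      then show "c \<bullet> u \<le> 1" by simp
    qed
    then have "c \<in> polar (convex_cone hull C)" unfolding polar_def by simp
    then show False using nin by blast
  qed
next
  assume "\<exists>x\<in>C. c \<bullet> x > 0"
  then obtain x where x: "x \<in> C" "c \<bullet> x > 0" by blast
  have "x \<in> convex_cone hull C" using x(1) by (rule hull_inc)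
  moreover have "0 \<le> 2 / (c \<bullet> x)" using x(2) by simp
  ultimately have p: "(2 / (c \<bullet> x)) *\<^sub>R x \<in> convex_cone hull C"
    by (rule conicD[OF conic_convex_cone_hull])
  have v: "c \<bullet> ((2 / (c \<bullet> x)) *\<^sub>R x) = 2" using x(2) by simp
  show "c \<notin> polar (convex_cone hull C)"
  proof
    assume "c \<in> polar (convex_cone hull C)"
    then have "c \<bullet> ((2 / (c \<bullet> x)) *\<^sub>R x) \<le> 1" using p unfolding polar_def by blast
    then show False using v by simp
  qed
qed

end

theorem theorem4p5:
  fixes K :: "'e::euclidean_space set"
    and A :: "'e \<Rightarrow> 'f::euclidean_space"
    and b :: 'f
  assumes "closed K" and "convex K" and "conic K"
    and "K \<inter> uminus ` K = {0}"
    and "interior K \<noteq> {}"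
    and "linear A"
    and "{x \<in> K. A x = b} \<inter> interior K \<noteq> {}"
    and "compact {x \<in> K. A x = b}"
  shows "(\<forall>c. c \<notin> polar (convex_cone hull {x \<in> K. A x = b}) \<longrightarrow>
              (\<exists>x y. strictly_complementary A b K c x y))
         \<longleftrightarrow> facially_exposed (polar {x \<in> K. A x = b})"
proof -
  interpret setting K A b by (intro setting.intro assms)
  show ?thesis
  proof
    assume L: "\<forall>c. c \<notin> polar (convex_cone hull {x \<in> K. A x = b}) \<longrightarrow>
              (\<exists>x y. strictly_complementary A b K c x y)"
    show "facially_exposed (polar {x \<in> K. A x = b})"
      by (rule dirB) (use L hull_polar in blast)
  next
    assume R: "facially_exposed (polar {x \<in> K. A x = b})"
    show "\<forall>c. c \<notin> polar (convex_cone hull {x \<in> K. A x = b}) \<longrightarrow>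
              (\<exists>x y. strictly_complementary A b K c x y)"
      using dirA[OF R] hull_polar by blast
  qed
qed


end
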